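(* Let $R$ and $B$ be disjoint finite sets of points in the plane such that no three points of $R\cup B$ are collinear, and let $f:R\to\{2,3,4,\ldots\}$ be a function. If $2\le |B|\le \sum_{x\in R}(f(x)-2)+2$, then there exists a non-crossing geometric spanning tree $T$ on $R\cup B$ such that the set of leaves of $T$ is exactly $B$ and $2\le \deg_T(x)\le f(x)$ for every $x\in R$. Moreover, if $|B|=\sum_{x\in R}(f(x)-2)+2$, then $T$ satisfies $\deg_T(x)=f(x)$ for every $x\in R$.
   Context: The points of $R$ are called red and those of $B$ blue. A geometric spanning tree on a point set $P$ is a tree with vertex set $P$ whose edges are drawn as straight-line segments between their endpoints; it is non-crossing if no two edges intersect except at a common endpoint. $\deg_T(v)$ denotes the degree of vertex $v$ in $T$, and a leaf is a vertex of degree one. *)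

theory Defs
  imports "HOL-Analysis.Analysis"
begin

type_synonym point = "real^2"

definition graph_on :: "'a set \<Rightarrow> 'a set set \<Rightarrow> bool" where
  "graph_on V E \<longleftrightarrow> (\<forall>e\<in>E. \<exists>u v. e = {u, v} \<and> u \<noteq> v \<and> u \<in> V \<and> v \<in> V)"

definition adj :: "'a set set \<Rightarrow> 'a \<Rightarrow> 'a \<Rightarrow> bool" where
  "adj E u v \<longleftrightarrow> {u, v} \<in> E \<and> u \<noteq> v"

definition connected_graph :: "'a set \<Rightarrow> 'a set set \<Rightarrow> bool" where
  "connected_graph V E \<longleftrightarrow> (\<forall>u\<in>V. \<forall>v\<in>V. (adj E)\<^sup>*\<^sup>* u v)"

definition is_cycle :: "'a set set \<Rightarrow> 'a list \<Rightarrow> bool" where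
  "is_cycle E xs \<longleftrightarrow> length xs \<ge> 3 \<and> distinct xs \<and>
     (\<forall>i. Suc i < length xs \<longrightarrow> adj E (xs ! i) (xs ! Suc i)) \<and>
     adj E (last xs) (hd xs)"

definition acyclic_graph :: "'a set set \<Rightarrow> bool" where
  "acyclic_graph E \<longleftrightarrow> (\<nexists>xs. is_cycle E xs)"

definition is_tree :: "'a set \<Rightarrow> 'a set set \<Rightarrow> bool" where
  "is_tree V E \<longleftrightarrow> graph_on V E \<and> connected_graph V E \<and> acyclic_graph E"

definition degree :: "'a set set \<Rightarrow> 'a \<Rightarrow> nat" where
  "degree E v = card {e\<in>E. v \<in> e}"

definition non_crossing :: "point set set \<Rightarrow> bool" where
  "non_crossing E \<longleftrightarrow> (\<forall>e1\<in>E. \<forall>e2\<in>E. e1 \<noteq> e2 \<longrightarrow> convex hull e1 \<inter> convex hull e2 \<subseteq> e1 \<inter> e2)"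

definition general_position :: "point set \<Rightarrow> bool" where
  "general_position P \<longleftrightarrow> (\<forall>S\<subseteq>P. card S = 3 \<longrightarrow> \<not> collinear S)"

end

theory Submission
  imports Defs
begin

lemma prop_around:
  fixes P :: "nat \<Rightarrow> bool"
  assumes pn: "p < n" and Pp: "P p" and step: "\<forall>i<n. P i \<and> \<not> P (Suc i mod n) \<longrightarrow> Suc i mod n = p"
  shows "\<forall>i<n. P i"
proof -
  have A: "P ((p + k) mod n)" if "k < n" for k
    using that
  proof (induction k)
    case 0 then show ?case using Pp pn by simp
  next
    case (Suc k)
    have i: "(p + k) mod n < n" using pn by simp
    have e: "Suc ((p + k) mod n) mod n = (p + Suc k) mod n" by (simp add: mod_Suc_eq)
    show ?case
    proof (rule ccontr)
      assume "\<not> P ((p + Suc k) mod n)"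
      then have "(p + Suc k) mod n = p" using step i Suc by (metis e Suc_lessD)
      moreover have "(p + Suc k) mod n \<noteq> p"
      proof (cases "p + Suc k < n")
        case True then show ?thesis by simp
      next
        case False
        then have "(p + Suc k) mod n = p + Suc k - n" using pn Suc.prems
          by (simp add: mod_if le_mod_geq)
        then show ?thesis using Suc.prems False by simp
      qed
      ultimately show False by simp
    qed
  qed
  show ?thesis
  proof (intro allI impI)
    fix i assume i: "i < n"
    define k where "k = (if p \<le> i then i - p else i + n - p)"
    have "k < n" using i pn unfolding k_def by auto
    moreover have "(p + k) mod n = i" using i pn unfolding k_def by (auto simp: mod_if)
    ultimately show "P i" using A by metis
  qed
qed

lemma graph_on_edge:
  assumes "graph_on V E" "e \<in> E"
  obtains a b where "e = {a,b}" "a \<noteq> b" "a \<in> V" "b \<in> V"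
  using assms unfolding graph_on_def by blast

lemma cycle_edges:
  assumes "is_cycle E xs"
  shows "\<forall>i<length xs. {xs!i, xs!(Suc i mod length xs)} \<in> E \<and> xs!i \<noteq> xs!(Suc i mod length xs)"
proof (intro allI impI)
  fix i assume i: "i < length xs"
  let ?n = "length xs"
  have n3: "?n \<ge> 3" using assms unfolding is_cycle_def by simp
  show "{xs!i, xs!(Suc i mod ?n)} \<in> E \<and> xs!i \<noteq> xs!(Suc i mod ?n)"
  proof (cases "Suc i < ?n")
    case True
    then show ?thesis using assms unfolding is_cycle_def adj_def by simp
  next
    case False
    then have "Suc i = ?n" using i by simp
    then have e: "Suc i mod ?n = 0" by simp
    have "last xs = xs ! i" using \<open>Suc i = ?n\<close> by (metis diff_Suc_1 last_conv_nth list.size(3) n3 not_numeral_le_zero)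
    moreover have "hd xs = xs ! 0" using n3 by (cases xs) auto
    ultimately show ?thesis using assms e unfolding is_cycle_def adj_def by (simp add: insert_commute)
  qed
qed

lemma cycle_from_edges:
  assumes "length xs \<ge> 3" "distinct xs"
    "\<forall>i<length xs. {xs!i, xs!(Suc i mod length xs)} \<in> E"
  shows "is_cycle E xs"
proof -
  let ?n = "length xs"
  have "adj E (xs ! i) (xs ! Suc i)" if "Suc i < ?n" for i
  proof -
    have sm: "Suc i mod ?n = Suc i" using that by simp
    have "{xs!i, xs!(Suc i mod ?n)} \<in> E" using assms(3) that by (meson Suc_lessD)
    then have "{xs!i, xs!(Suc i)} \<in> E" using sm by simp
    moreover have "xs!i \<noteq> xs!Suc i" using assms(2) that by (simp add: nth_eq_iff_index_eq)
    ultimately show ?thesis using that unfolding adj_def by blast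
  qed
  moreover have "adj E (last xs) (hd xs)"
  proof -
    have sn: "Suc (?n - 1) = ?n" using assms(1) by arith
    have i: "?n - 1 < ?n" "Suc (?n - 1) mod ?n = 0" using assms(1) sn by auto
    have "{xs!(?n-1), xs!0} \<in> E" using assms(3) i by metis
    moreover have "last xs = xs ! (?n - 1)" using assms(1) last_conv_nth[of xs] by (cases xs) auto
    moreover have "hd xs = xs ! 0" using assms(1) by (cases xs) auto
    moreover have "xs!(?n-1) \<noteq> xs!0"
    proof
      assume "xs!(?n-1) = xs!0"
      moreover have a: "?n - 1 < ?n" and b: "0 < ?n" and "?n - 1 \<noteq> 0" using assms(1) by auto
      moreover note nth_eq_iff_index_eq[OF assms(2) a b]
      ultimately show False by simp
    qed
    ultimately show ?thesis unfolding adj_def by (simp add: insert_commute)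
  qed
  ultimately show ?thesis using assms(1,2) unfolding is_cycle_def by blast
qed

lemma cycle_split:
  assumes cyc: "is_cycle (T1 \<union> T2) xs" and g1: "graph_on Y T1" and g2: "graph_on Z T2"
    and YZ: "Y \<inter> Z \<subseteq> {c}"
  shows "is_cycle T1 xs \<or> is_cycle T2 xs"
proof -
  let ?n = "length xs"
  define E where "E i = {xs!i, xs!(Suc i mod ?n)}" for i
  have n3: "?n \<ge> 3" and dist: "distinct xs" using cyc unfolding is_cycle_def by auto
  have npos: "0 < ?n" using n3 by linarith
  have inE: "\<forall>i<?n. E i \<in> T1 \<union> T2" using cycle_edges[OF cyc] unfolding E_def by blast
  define p where "p = (if c \<in> set xs then (SOME j. j < ?n \<and> xs ! j = c) else 0)"
  have pprop: "p < ?n \<and> xs ! p = c" if cin: "c \<in> set xs"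
  proof -
    have "\<exists>j. j < ?n \<and> xs ! j = c" using cin by (simp add: in_set_conv_nth)
    then have "(SOME j. j < ?n \<and> xs ! j = c) < ?n \<and> xs ! (SOME j. j < ?n \<and> xs ! j = c) = c"
      by (rule someI_ex)
    then show ?thesis unfolding p_def using cin by simp
  qed
  have pn: "p < ?n"
  proof (cases "c \<in> set xs")
    case True then show ?thesis using pprop by blast
  next
    case False then show ?thesis using n3 unfolding p_def by (cases xs) auto
  qed
  have pc: "j = p" if "j < ?n" "xs ! j = c" for j
  proof -
    have "c \<in> set xs" using that by auto
    then have "p < ?n \<and> xs ! p = c" using pprop by blast
    then show ?thesis using that dist nth_eq_iff_index_eq[OF dist, of j p] by simp
  qed
  have sub1: "e \<subseteq> Y" if "e \<in> T1" for e using graph_on_edge[OF g1 that] by blast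
  have sub2: "e \<subseteq> Z" if "e \<in> T2" for e using graph_on_edge[OF g2 that] by blast
  have mem: "xs ! (Suc i mod ?n) \<in> E i" "xs ! (Suc i mod ?n) \<in> E (Suc i mod ?n)" for i
    unfolding E_def by auto
  have shared: "Suc i mod ?n = p" if i: "i < ?n" and a: "xs ! (Suc i mod ?n) \<in> Y" and b: "xs ! (Suc i mod ?n) \<in> Z" for i
  proof -
    have j: "Suc i mod ?n < ?n" using npos by simp
    have "xs ! (Suc i mod ?n) = c" using a b YZ by blast
    then show ?thesis using pc j by blast
  qed
  have "(\<forall>i<?n. E i \<in> T1) \<or> (\<forall>i<?n. E i \<in> T2)"
  proof (cases "E p \<in> T1")
    case True
    have "\<forall>i<?n. E i \<in> T1"
    proof (rule prop_around[where P="\<lambda>i. E i \<in> T1", OF pn True], intro allI impI)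
      fix i assume i: "i < ?n" and h: "E i \<in> T1 \<and> E (Suc i mod ?n) \<notin> T1"
      have "Suc i mod ?n < ?n" using npos by simp
      then have "E (Suc i mod ?n) \<in> T2" using inE h by blast
      have "xs ! (Suc i mod ?n) \<in> Y" using sub1 h mem by blast
      moreover have "xs ! (Suc i mod ?n) \<in> Z" using sub2 \<open>E (Suc i mod ?n) \<in> T2\<close> mem by blast
      ultimately show "Suc i mod ?n = p" using shared[OF i] by blast
    qed
    then show ?thesis by blast
  next
    case False
    then have T2p: "E p \<in> T2" using inE pn by blast
    have "\<forall>i<?n. E i \<in> T2"
    proof (rule prop_around[where P="\<lambda>i. E i \<in> T2", OF pn T2p], intro allI impI)
      fix i assume i: "i < ?n" and h: "E i \<in> T2 \<and> E (Suc i mod ?n) \<notin> T2"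
      have "Suc i mod ?n < ?n" using npos by simp
      then have "E (Suc i mod ?n) \<in> T1" using inE h by blast
      have "xs ! (Suc i mod ?n) \<in> Z" using sub2 h mem by blast
      moreover have "xs ! (Suc i mod ?n) \<in> Y" using sub1 \<open>E (Suc i mod ?n) \<in> T1\<close> mem by blast
      ultimately show "Suc i mod ?n = p" using shared[OF i] by blast
    qed
    then show ?thesis by blast
  qed
  then show ?thesis using cycle_from_edges[OF n3 dist] unfolding E_def by blast
qed

lemma tree_glue:
  assumes t1: "is_tree Y T1" and t2: "is_tree Z T2" and YZ: "Y \<inter> Z = {c}"
  shows "is_tree (Y \<union> Z) (T1 \<union> T2)" "T1 \<inter> T2 = {}"
proof -
  have g1: "graph_on Y T1" and g2: "graph_on Z T2" using t1 t2 unfolding is_tree_def by auto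
  show "T1 \<inter> T2 = {}"
  proof (rule ccontr)
    assume "T1 \<inter> T2 \<noteq> {}"
    then obtain e where "e \<in> T1" "e \<in> T2" by blast
    obtain a b where ab: "e = {a,b}" "a \<noteq> b" "a \<in> Y" "b \<in> Y" by (rule graph_on_edge[OF g1 \<open>e \<in> T1\<close>])
    have "e \<subseteq> Z" using graph_on_edge[OF g2 \<open>e \<in> T2\<close>] by blast
    then have "a \<in> Y \<inter> Z" "b \<in> Y \<inter> Z" using ab by auto
    then show False using YZ ab(2) by auto
  qed
  have g: "graph_on (Y \<union> Z) (T1 \<union> T2)"
    unfolding graph_on_def
  proof
    fix e assume "e \<in> T1 \<union> T2"
    then show "\<exists>u v. e = {u, v} \<and> u \<noteq> v \<and> u \<in> Y \<union> Z \<and> v \<in> Y \<union> Z"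
    proof
      assume "e \<in> T1"
      then obtain a b where "e = {a,b}" "a \<noteq> b" "a \<in> Y" "b \<in> Y" by (rule graph_on_edge[OF g1])
      then show ?thesis by blast
    next
      assume "e \<in> T2"
      then obtain a b where "e = {a,b}" "a \<noteq> b" "a \<in> Z" "b \<in> Z" by (rule graph_on_edge[OF g2])
      then show ?thesis by blast
    qed
  qed
  have m1: "(adj T1)\<^sup>*\<^sup>* \<le> (adj (T1 \<union> T2))\<^sup>*\<^sup>*"
    by (rule rtranclp_mono) (auto simp: adj_def)
  have m2: "(adj T2)\<^sup>*\<^sup>* \<le> (adj (T1 \<union> T2))\<^sup>*\<^sup>*"
    by (rule rtranclp_mono) (auto simp: adj_def)
  have c1: "(adj (T1 \<union> T2))\<^sup>*\<^sup>* u v" if "u \<in> Y" "v \<in> Y" for u v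
  proof -
    have "(adj T1)\<^sup>*\<^sup>* u v" using t1 that unfolding is_tree_def connected_graph_def by blast
    then show ?thesis by (rule predicate2D[OF m1])
  qed
  have c2: "(adj (T1 \<union> T2))\<^sup>*\<^sup>* u v" if "u \<in> Z" "v \<in> Z" for u v
  proof -
    have "(adj T2)\<^sup>*\<^sup>* u v" using t2 that unfolding is_tree_def connected_graph_def by blast
    then show ?thesis by (rule predicate2D[OF m2])
  qed
  have cY: "c \<in> Y" "c \<in> Z" using YZ by auto
  have conn: "connected_graph (Y \<union> Z) (T1 \<union> T2)"
    unfolding connected_graph_def
  proof (intro ballI)
    fix u v assume u: "u \<in> Y \<union> Z" and v: "v \<in> Y \<union> Z"
    have uc: "(adj (T1 \<union> T2))\<^sup>*\<^sup>* u c" using u c1[OF _ cY(1)] c2[OF _ cY(2)] by blast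
    have cv: "(adj (T1 \<union> T2))\<^sup>*\<^sup>* c v" using v c1[OF cY(1)] c2[OF cY(2)] by blast
    show "(adj (T1 \<union> T2))\<^sup>*\<^sup>* u v" using uc cv by (rule rtranclp_trans)
  qed
  have ac: "acyclic_graph (T1 \<union> T2)"
    unfolding acyclic_graph_def
  proof
    assume "\<exists>xs. is_cycle (T1 \<union> T2) xs"
    then obtain xs where "is_cycle (T1 \<union> T2) xs" by blast
    then have "is_cycle T1 xs \<or> is_cycle T2 xs" using cycle_split[OF _ g1 g2] YZ by blast
    then show False using t1 t2 unfolding is_tree_def acyclic_graph_def by blast
  qed
  show "is_tree (Y \<union> Z) (T1 \<union> T2)" using g conn ac unfolding is_tree_def by blast
qed

lemma tree_single: "is_tree {c} {}"
  unfolding is_tree_def graph_on_def connected_graph_def acyclic_graph_def is_cycle_def adj_def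
  by auto

lemma tree_edge:
  assumes "a \<noteq> b"
  shows "is_tree {a,b} {{a,b}}"
proof -
  have g: "graph_on {a,b} {{a,b}}" using assms unfolding graph_on_def by blast
  have "adj {{a,b}} a b" "adj {{a,b}} b a" using assms unfolding adj_def by (auto simp: insert_commute)
  then have conn: "connected_graph {a,b} {{a,b}}" unfolding connected_graph_def by auto
  have ac: "acyclic_graph {{a,b}}"
    unfolding acyclic_graph_def
  proof
    assume "\<exists>xs. is_cycle {{a,b}} xs"
    then obtain xs where c: "is_cycle {{a,b}} xs" by blast
    have "\<forall>i<length xs. {xs!i, xs!(Suc i mod length xs)} \<in> {{a,b}}" using cycle_edges[OF c] by blast
    then have "\<forall>i<length xs. xs ! i \<in> {a,b}" by blast
    then have "set xs \<subseteq> {a,b}" by (auto simp: in_set_conv_nth)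
    then have "card (set xs) \<le> card {a,b}" by (intro card_mono) auto
    also have "card {a,b} \<le> 2" by (simp add: card_insert_le_m1)
    finally have "card (set xs) \<le> 2" .
    moreover have "card (set xs) = length xs" "length xs \<ge> 3" using c unfolding is_cycle_def by (auto simp: distinct_card)
    ultimately show False by simp
  qed
  show ?thesis using g conn ac unfolding is_tree_def by blast
qed

lemma finite_edges: "finite V \<Longrightarrow> graph_on V E \<Longrightarrow> finite E"
proof -
  assume "finite V" "graph_on V E"
  have "E \<subseteq> Pow V"
  proof
    fix e assume "e \<in> E"
    then obtain a b where "e = {a,b}" "a \<in> V" "b \<in> V" by (rule graph_on_edge[OF \<open>graph_on V E\<close>])
    then show "e \<in> Pow V" by auto
  qed
  then show "finite E" using \<open>finite V\<close> by (meson finite_Pow_iff finite_subset)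
qed

lemma degree_Un:
  assumes "finite T1" "finite T2" "T1 \<inter> T2 = {}"
  shows "degree (T1 \<union> T2) x = degree T1 x + degree T2 x"
proof -
  have "{e \<in> T1 \<union> T2. x \<in> e} = {e \<in> T1. x \<in> e} \<union> {e \<in> T2. x \<in> e}" by blast
  then show ?thesis unfolding degree_def using assms by (simp add: card_Un_disjoint disjoint_iff)
qed

lemma degree_out: assumes "graph_on V E" "x \<notin> V" shows "degree E x = 0"
proof -
  have emp: "{e \<in> E. x \<in> e} = {}"
  proof (rule ccontr)
    assume "{e \<in> E. x \<in> e} \<noteq> {}"
    then obtain e where "e \<in> E" "x \<in> e" by blast
    moreover obtain a b where "e = {a,b}" "a \<in> V" "b \<in> V" by (rule graph_on_edge[OF assms(1) \<open>e \<in> E\<close>])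
    ultimately show False using assms(2) by auto
  qed
  show ?thesis unfolding degree_def emp by simp
qed

lemma degree_edge: "a \<noteq> b \<Longrightarrow> degree {{a,b}} a = 1 \<and> degree {{a,b}} b = 1"
proof -
  have de: "{e \<in> {{a,b}}. a \<in> e} = {{a,b}}" "{e \<in> {{a,b}}. b \<in> e} = {{a,b}}" by auto
  show ?thesis unfolding degree_def de by simp
qed

definition cross2 :: "point \<Rightarrow> point \<Rightarrow> real" where
  "cross2 a b = a$1 * b$2 - a$2 * b$1"

lemma real_trans_aux:
  fixes a1 a2 b1 b2 c1 c2 :: real
  assumes "a1 > 0 \<or> (a1 = 0 \<and> a2 > 0)" "b1 > 0 \<or> (b1 = 0 \<and> b2 > 0)"
     "c1 > 0 \<or> (c1 = 0 \<and> c2 > 0)" "a1*b2 - a2*b1 > 0" "b1*c2 - b2*c1 > 0"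
  shows "a1*c2 - a2*c1 > 0"
proof -
  have id: "(a1*b2 - a2*b1) * c1 + (b1*c2 - b2*c1) * a1 + (c1*a2 - c2*a1) * b1 = 0"
    by (simp add: algebra_simps)
  show ?thesis
  proof (cases "b1 > 0")
    case True
    have "(a1*b2 - a2*b1) * c1 \<ge> 0" using assms(3,4) by auto
    moreover have "(b1*c2 - b2*c1) * a1 \<ge> 0" using assms(1,5) by auto
    ultimately have "(c1*a2 - c2*a1) * b1 \<le> 0" using id by linarith
    then have le: "c1*a2 - c2*a1 \<le> 0" using True by (simp add: mult_le_0_iff)
    show ?thesis
    proof (cases "a1 = 0 \<and> c1 = 0")
      case True
      then have "a1*b2 - a2*b1 = - a2*b1" by simp
      moreover have "a2 > 0" using assms(1) True by auto
      then have "a2*b1 > 0" using \<open>b1 > 0\<close> by simp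
      ultimately show ?thesis using assms(4) by linarith
    next
      case False
      then have "(a1*b2 - a2*b1) * c1 + (b1*c2 - b2*c1) * a1 > 0"
      proof -
        have "a1 > 0 \<or> c1 > 0" using False assms(1,3) by auto
        then show ?thesis using assms(1,3,4,5) by (metis add_pos_nonneg add_nonneg_pos less_eq_real_def mult_pos_pos mult_nonneg_nonneg)
      qed
      then have "(c1*a2 - c2*a1) * b1 < 0" using id by linarith
      then have "c1*a2 - c2*a1 < 0" using True by (simp add: mult_less_0_iff)
      then show ?thesis by (smt (verit) mult.commute)
    qed
  next
    case False
    then have "b1 = 0" "b2 > 0" using assms(2) by auto
    then have "a1 > 0" using assms(4) by (simp add: zero_less_mult_iff)
    moreover have "c1 < 0" using assms(5) \<open>b1 = 0\<close> \<open>b2 > 0\<close> by (simp add: mult_less_0_iff)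
    ultimately show ?thesis using assms(3) by linarith
  qed
qed

lemma cross2_trans:
  assumes "a$1 > 0 \<or> (a$1 = 0 \<and> a$2 > 0)" "b$1 > 0 \<or> (b$1 = 0 \<and> b$2 > 0)"
     "c$1 > 0 \<or> (c$1 = 0 \<and> c$2 > 0)" "cross2 a b > 0" "cross2 b c > 0"
  shows "cross2 a c > 0"
  using real_trans_aux[OF assms[unfolded cross2_def]] unfolding cross2_def .

lemma real_coll_aux:
  fixes x1 x2 y1 y2 :: real
  assumes "x1 \<noteq> 0" "x1*y2 - x2*y1 = 0"
  shows "y1 = (y1/x1)*x1 \<and> y2 = (y1/x1)*x2"
  using assms by (auto simp: field_simps)

lemma cross2_zero_collinear:
  assumes "cross2 (a - u) (b - u) = 0"
  shows "collinear {u, a, b}"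
proof -
  have e: "{u,a,b} = {a,u,b}" by auto
  show ?thesis
  proof (cases "a = u")
    case True then show ?thesis by (simp add: insert_commute)
  next
    case False
    then obtain k where k: "(a-u)$k \<noteq> 0" by (metis vec_eq_iff vector_minus_component eq_iff_diff_eq_0)
    have "collinear {0, a-u, b-u}"
    proof (cases "(a-u)$1 \<noteq> 0")
      case True
      from real_coll_aux[OF True, of "(b-u)$2" "(a-u)$2" "(b-u)$1"] assms
      have "(b-u)$1 = ((b-u)$1/(a-u)$1) * (a-u)$1 \<and> (b-u)$2 = ((b-u)$1/(a-u)$1) * (a-u)$2"
        unfolding cross2_def by simp
      then have "b - u = ((b-u)$1/(a-u)$1) *\<^sub>R (a - u)"
        unfolding vec_eq_iff forall_2 by simp
      then show ?thesis by (metis collinear_lemma)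
    next
      case F: False
      then have T: "(a-u)$2 \<noteq> 0" using k by (metis exhaust_2)
      from real_coll_aux[OF T, of "(b-u)$1" "(a-u)$1" "(b-u)$2"] assms
      have "(b-u)$2 = ((b-u)$2/(a-u)$2) * (a-u)$2 \<and> (b-u)$1 = ((b-u)$2/(a-u)$2) * (a-u)$1"
        unfolding cross2_def by (simp add: algebra_simps)
      then have "b - u = ((b-u)$2/(a-u)$2) *\<^sub>R (a - u)"
        unfolding vec_eq_iff forall_2 by simp
      then show ?thesis by (metis collinear_lemma)
    qed
    then show ?thesis using e collinear_3[of a u b] by simp
  qed
qed

lemma cross2_comb:
  assumes "u + v = 1"
  shows "cross2 d ((u *\<^sub>R x + v *\<^sub>R y) - c) = u * cross2 d (x - c) + v * cross2 d (y - c)"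
proof -
  have v: "v = 1 - u" using assms by simp
  show ?thesis unfolding cross2_def v by (simp add: algebra_simps)
qed

lemma hull_strict:
  assumes "\<forall>y\<in>Y. y = c \<or> cross2 d (y - c) < 0"
  shows "convex hull Y \<subseteq> {c} \<union> {x. cross2 d (x - c) < 0}"
proof (rule hull_minimal)
  show "Y \<subseteq> {c} \<union> {x. cross2 d (x - c) < 0}" using assms by auto
  show "convex ({c} \<union> {x. cross2 d (x - c) < 0})"
    unfolding convex_def
  proof (intro ballI allI impI)
    fix x y and u v :: real
    assume x: "x \<in> {c} \<union> {x. cross2 d (x - c) < 0}" and y: "y \<in> {c} \<union> {x. cross2 d (x - c) < 0}"
      and u: "0 \<le> u" and v: "0 \<le> v" and uv: "u + v = 1"
    have xl: "cross2 d (x - c) \<le> 0" and yl: "cross2 d (y - c) \<le> 0" using x y by (auto simp: cross2_def)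
    have xe: "cross2 d (x - c) = 0 \<Longrightarrow> x = c" using x by auto
    have ye: "cross2 d (y - c) = 0 \<Longrightarrow> y = c" using y by auto
    show "u *\<^sub>R x + v *\<^sub>R y \<in> {c} \<union> {x. cross2 d (x - c) < 0}"
    proof (cases "cross2 d ((u *\<^sub>R x + v *\<^sub>R y) - c) < 0")
      case True then show ?thesis by simp
    next
      case False
      then have "u * cross2 d (x - c) + v * cross2 d (y - c) \<ge> 0" using cross2_comb[OF uv] by simp
      moreover have "u * cross2 d (x - c) \<le> 0" "v * cross2 d (y - c) \<le> 0"
        using u v xl yl by (auto simp: mult_nonneg_nonpos)
      ultimately have "u * cross2 d (x - c) = 0" "v * cross2 d (y - c) = 0" by linarith+
      then have "(u = 0 \<or> x = c) \<and> (v = 0 \<or> y = c)" using xe ye by auto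
      moreover have "u *\<^sub>R c + v *\<^sub>R c = c" using uv by (metis scaleR_add_left scaleR_one)
      ultimately have "u *\<^sub>R x + v *\<^sub>R y = c" using uv by auto
      then show ?thesis by simp
    qed
  qed
qed

lemma hull_nonneg:
  assumes "\<forall>y\<in>Y. cross2 d (y - c) \<ge> 0"
  shows "convex hull Y \<subseteq> {x. cross2 d (x - c) \<ge> 0}"
proof (rule hull_minimal)
  show "Y \<subseteq> {x. cross2 d (x - c) \<ge> 0}" using assms by auto
  show "convex {x. cross2 d (x - c) \<ge> 0}"
    unfolding convex_def
  proof (intro ballI allI impI)
    fix x y and u v :: real
    assume x: "x \<in> {x. cross2 d (x - c) \<ge> 0}" and y: "y \<in> {x. cross2 d (x - c) \<ge> 0}"
      and u: "0 \<le> u" and v: "0 \<le> v" and uv: "u + v = 1"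
    then show "u *\<^sub>R x + v *\<^sub>R y \<in> {x. cross2 d (x - c) \<ge> 0}"
      using cross2_comb[OF uv] by simp
  qed
qed

lemma gp_subset: "general_position P \<Longrightarrow> Q \<subseteq> P \<Longrightarrow> general_position Q"
  unfolding general_position_def by blast

lemma gp_seg_endpoint:
  assumes gp: "general_position P" and "a \<in> P" "b \<in> P" "x \<in> P" "x \<in> convex hull {a, b}"
  shows "x = a \<or> x = b"
proof (rule ccontr)
  assume n: "\<not> (x = a \<or> x = b)"
  have "x \<in> closed_segment a b" using assms(5) by (simp add: segment_convex_hull)
  then have "between (a,b) x" by (simp add: between_mem_segment)
  then have col: "collinear {a,b,x}" using collinear_between_cases by blast
  show False
  proof (cases "a = b")
    case True then show False using \<open>x \<in> closed_segment a b\<close> n by simp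
  next
    case False
    then have "card {a,b,x} = 3" using n by auto
    then show False using gp col assms(2-4) unfolding general_position_def by auto
  qed
qed

lemma gp_cross_ne:
  assumes gp: "general_position P" and "u \<in> P" "a \<in> P" "b \<in> P" "u \<noteq> a" "u \<noteq> b" "a \<noteq> b"
  shows "cross2 (a - u) (b - u) \<noteq> 0"
proof
  assume "cross2 (a - u) (b - u) = 0"
  then have "collinear {u,a,b}" by (rule cross2_zero_collinear)
  moreover have "card {u,a,b} = 3" using assms by auto
  ultimately show False using gp assms(2-4) unfolding general_position_def by auto
qed

definition compat :: "point set set \<Rightarrow> point set set \<Rightarrow> bool" where
  "compat T1 T2 \<longleftrightarrow> (\<forall>e1\<in>T1. \<forall>e2\<in>T2. convex hull e1 \<inter> convex hull e2 \<subseteq> e1 \<inter> e2)"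

lemma compat_sep:
  assumes gp: "general_position P" and g1: "graph_on Y T1" and g2: "graph_on Z T2"
    and "Y \<subseteq> P" "Z \<subseteq> P" "c \<in> P"
    and sy: "\<forall>y\<in>Y. y = c \<or> cross2 d (y - c) < 0" and sz: "\<forall>z\<in>Z. cross2 d (z - c) \<ge> 0"
  shows "compat T1 T2" "compat T2 T1"
proof -
  have main: "convex hull e1 \<inter> convex hull e2 \<subseteq> e1 \<inter> e2" if e1: "e1 \<in> T1" and e2: "e2 \<in> T2" for e1 e2
  proof
    fix x assume x: "x \<in> convex hull e1 \<inter> convex hull e2"
    obtain a b where ab: "e1 = {a,b}" "a \<in> Y" "b \<in> Y" using graph_on_edge[OF g1 e1] by metis
    obtain a' b' where ab': "e2 = {a',b'}" "a' \<in> Z" "b' \<in> Z" using graph_on_edge[OF g2 e2] by metis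
    have "convex hull e1 \<subseteq> {c} \<union> {x. cross2 d (x - c) < 0}"
      by (rule hull_strict) (use sy ab in auto)
    moreover have "convex hull e2 \<subseteq> {x. cross2 d (x - c) \<ge> 0}"
      by (rule hull_nonneg) (use sz ab' in auto)
    ultimately have xc: "x = c" using x by force
    have "c = a \<or> c = b" using gp_seg_endpoint[OF gp, of a b c] x xc ab assms(4,6) by auto
    moreover have "c = a' \<or> c = b'" using gp_seg_endpoint[OF gp, of a' b' c] x xc ab' assms(5,6) by auto
    ultimately show "x \<in> e1 \<inter> e2" using xc ab ab' by auto
  qed
  show "compat T1 T2" unfolding compat_def using main by blast
  show "compat T2 T1" unfolding compat_def using main by blast
qed

lemma compat_Un_right: "compat A B \<Longrightarrow> compat A C \<Longrightarrow> compat A (B \<union> C)"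
  unfolding compat_def by blast
lemma compat_Un_left: "compat B A \<Longrightarrow> compat C A \<Longrightarrow> compat (B \<union> C) A"
  unfolding compat_def by blast

lemma nc_union:
  assumes "non_crossing T1" "non_crossing T2" "compat T1 T2" "compat T2 T1"
  shows "non_crossing (T1 \<union> T2)"
  using assms unfolding non_crossing_def compat_def by blast


lemma cross2_add_left: "cross2 (a + b) c = cross2 a c + cross2 b c"
  unfolding cross2_def by (simp add: algebra_simps)
lemma cross2_anti: "cross2 b a = - cross2 a b"
  unfolding cross2_def by (simp add: algebra_simps)
lemma cross2_self: "cross2 a a = 0"
  unfolding cross2_def by (simp add: algebra_simps)
lemma cross2_zero_right: "cross2 a 0 = 0"
  unfolding cross2_def by simp
lemma cross2_shift: "cross2 d (x - c) = cross2 d (x - u) - cross2 d (c - u)"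
  unfolding cross2_def by (simp add: algebra_simps)
lemma cross2_minus_left: "cross2 (u - q) b = - cross2 (q - u) b"
  unfolding cross2_def by (simp add: algebra_simps)

lemma sorted_exists:
  fixes r :: "'a \<Rightarrow> 'a \<Rightarrow> bool"
  assumes "finite Q"
    and "\<forall>a\<in>Q. \<forall>b\<in>Q. \<forall>c\<in>Q. r a b \<longrightarrow> r b c \<longrightarrow> r a c"
    and "\<forall>a\<in>Q. \<forall>b\<in>Q. a \<noteq> b \<longrightarrow> r a b \<or> r b a"
    and "\<forall>a\<in>Q. \<not> r a a"
  shows "\<exists>xs. set xs = Q \<and> distinct xs \<and> sorted_wrt r xs"
  using assms
proof (induction Q rule: finite_induct)
  case empty then show ?case by simp
next
  case (insert x F)
  have tr: "\<forall>a\<in>F. \<forall>b\<in>F. \<forall>c\<in>F. r a b \<longrightarrow> r b c \<longrightarrow> r a c"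
    using insert.prems(1) by blast
  have to: "\<forall>a\<in>F. \<forall>b\<in>F. a \<noteq> b \<longrightarrow> r a b \<or> r b a"
    using insert.prems(2) by blast
  have ir: "\<forall>a\<in>F. \<not> r a a" using insert.prems(3) by blast
  obtain xs where xs: "set xs = F" "distinct xs" "sorted_wrt r xs" using insert.IH[OF tr to ir] by blast
  define ys where "ys = filter (\<lambda>y. r y x) xs @ [x] @ filter (\<lambda>y. r x y) xs"
  have tot: "r y x \<or> r x y" if "y \<in> F" for y
  proof -
    have "y \<noteq> x" using that insert.hyps(2) by blast
    then show ?thesis using insert.prems(2) that by blast
  qed
  have nb: "\<not> (r y x \<and> r x y)" if "y \<in> F" for y
  proof
    assume "r y x \<and> r x y"
    then have "r y y" using insert.prems(1) that by blast
    then show False using insert.prems(3) that by blast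
  qed
  have "set ys = insert x F" unfolding ys_def using xs(1) tot by auto
  moreover have "distinct ys" unfolding ys_def using xs(1,2) nb insert.hyps(2) by auto
  moreover have "sorted_wrt r ys"
  proof -
    have "r a c" if "a \<in> F" "c \<in> F" "r a x" "r x c" for a c
      using insert.prems(1) that by blast
    then show ?thesis unfolding ys_def using xs(1,3)
      by (auto simp: sorted_wrt_append sorted_wrt_filter)
  qed
  ultimately show ?case by blast
qed

lemma lexmin_exists:
  fixes P :: "point set"
  assumes "finite P" "P \<noteq> {}"
  shows "\<exists>u\<in>P. \<forall>q\<in>P. q \<noteq> u \<longrightarrow> (q - u)$1 > 0 \<or> ((q - u)$1 = 0 \<and> (q - u)$2 > 0)"
proof -
  define m1 where "m1 = Min ((\<lambda>q. q$1) ` P)"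
  define P1 where "P1 = {q\<in>P. q$1 = m1}"
  have "m1 \<in> (\<lambda>q. q$1) ` P" unfolding m1_def using assms by (intro Min_in) auto
  then have P1ne: "P1 \<noteq> {}" unfolding P1_def by auto
  have fP1: "finite P1" unfolding P1_def using assms by simp
  define m2 where "m2 = Min ((\<lambda>q. q$2) ` P1)"
  have "m2 \<in> (\<lambda>q. q$2) ` P1" unfolding m2_def using fP1 P1ne by (intro Min_in) auto
  then obtain u where u: "u \<in> P1" "u$2 = m2" by auto
  have m1le: "m1 \<le> q$1" if "q \<in> P" for q unfolding m1_def using assms that by (intro Min_le) auto
  have m2le: "m2 \<le> q$2" if "q \<in> P1" for q unfolding m2_def using fP1 that by (intro Min_le) auto
  have u1: "u$1 = m1" using u unfolding P1_def by simp
  have uP: "u \<in> P" using u unfolding P1_def by simp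
  show ?thesis
  proof (intro bexI ballI impI)
    show "u \<in> P" by (rule uP)
    fix q assume q: "q \<in> P" "q \<noteq> u"
    show "(q - u)$1 > 0 \<or> ((q - u)$1 = 0 \<and> (q - u)$2 > 0)"
    proof (cases "q$1 = m1")
      case True
      then have "q \<in> P1" using q unfolding P1_def by simp
      then have "u$2 \<le> q$2" using m2le u by simp
      moreover have "q$2 \<noteq> u$2"
      proof
        assume "q$2 = u$2"
        then have "q = u" using True u1 by (simp add: vec_eq_iff forall_2)
        then show False using q by simp
      qed
      ultimately show ?thesis using True u1 by simp
    next
      case False
      then have "q$1 > u$1" using m1le[OF q(1)] u1 by simp
      then show ?thesis by simp
    qed
  qed
qed

lemma deg_glue:
  assumes "is_tree Y T1" "is_tree Z T2" "Y \<inter> Z = {c}" "finite Y" "finite Z"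
  shows "degree (T1 \<union> T2) x = degree T1 x + degree T2 x"
proof (rule degree_Un)
  show "finite T1" using assms(1,4) finite_edges unfolding is_tree_def by blast
  show "finite T2" using assms(2,5) finite_edges unfolding is_tree_def by blast
  show "T1 \<inter> T2 = {}" using tree_glue(2)[OF assms(1-3)] .
qed

lemma nc_edge: "non_crossing {{a,b}}"
  unfolding non_crossing_def by simp

lemma nc_empty: "non_crossing {}"
  unfolding non_crossing_def by simp

lemma core:
  fixes P :: "point set" and t :: "point \<Rightarrow> nat"
  assumes "finite P" "P \<noteq> {}" "general_position P"
    "(\<forall>x\<in>P. t x \<ge> 1) \<or> card P = 1"
    "(\<Sum>x\<in>P. 2 - int (t x)) = 2"
  shows "\<exists>T. is_tree P T \<and> non_crossing T \<and> (\<forall>x\<in>P. degree T x = t x)"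
  using assms
proof (induction "card P" arbitrary: P t rule: less_induct)
  case less
  note fin = less.prems(1) and ne = less.prems(2) and gp = less.prems(3) and sm = less.prems(5)
  show ?case
  proof (cases "card P = 1")
    case True
    then obtain c where Pc: "P = {c}" by (auto simp: card_Suc_eq)
    then have "t c = 0" using sm by simp
    moreover have "degree {} c = 0" unfolding degree_def by simp
    ultimately have "is_tree P {} \<and> non_crossing {} \<and> (\<forall>x\<in>P. degree {} x = t x)"
      using Pc tree_single nc_empty by auto
    then show ?thesis by blast
  next
    case False
    then have tge: "\<forall>x\<in>P. t x \<ge> 1" using less.prems(4) by blast
    have cP2: "card P \<ge> 2" using False ne fin by (metis One_nat_def card_0_eq less_2_cases not_le)
    obtain u where uP: "u \<in> P" and uH: "\<forall>q\<in>P. q \<noteq> u \<longrightarrow> (q - u)$1 > 0 \<or> ((q - u)$1 = 0 \<and> (q - u)$2 > 0)"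
      using lexmin_exists[OF fin ne] by blast
    define Q where "Q = P - {u}"
    have QP: "Q \<subseteq> P" and uQ: "u \<notin> Q" and PQ: "P = insert u Q" and finQ: "finite Q"
      unfolding Q_def using uP fin by auto
    have cQ: "card Q = card P - 1" unfolding Q_def using uP fin by simp
    define r where "r a b \<longleftrightarrow> cross2 (a - u) (b - u) > 0" for a b
    have rtr: "\<forall>a\<in>Q. \<forall>b\<in>Q. \<forall>c\<in>Q. r a b \<longrightarrow> r b c \<longrightarrow> r a c"
    proof (intro ballI impI)
      fix a b c assume abc: "a \<in> Q" "b \<in> Q" "c \<in> Q" and rab: "r a b" and rbc: "r b c"
      have H: "(x - u)$1 > 0 \<or> ((x - u)$1 = 0 \<and> (x - u)$2 > 0)" if "x \<in> Q" for x
      proof -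
        have xP: "x \<in> P" and xu: "x \<noteq> u" using that QP uQ by auto
        show ?thesis using uH[rule_format, OF xP xu] .
      qed
      show "r a c" using cross2_trans[OF H[OF abc(1)] H[OF abc(2)] H[OF abc(3)]] rab rbc
        unfolding r_def by blast
    qed
    have rto: "\<forall>a\<in>Q. \<forall>b\<in>Q. a \<noteq> b \<longrightarrow> r a b \<or> r b a"
    proof (intro ballI impI)
      fix a b assume "a \<in> Q" "b \<in> Q" "a \<noteq> b"
      then have "cross2 (a - u) (b - u) \<noteq> 0" using gp_cross_ne[OF gp uP, of a b] QP uQ by blast
      then show "r a b \<or> r b a" unfolding r_def using cross2_anti[of "b - u" "a - u"] by linarith
    qed
    have rir: "\<forall>a\<in>Q. \<not> r a a" unfolding r_def by (simp add: cross2_self)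
    obtain qs where qs: "set qs = Q" "distinct qs" "sorted_wrt r qs"
      using sorted_exists[OF finQ rtr rto rir] by blast
    define m where "m = length qs"
    have mQ: "m = card Q" unfolding m_def using qs by (metis distinct_card)
    have m1: "m \<ge> 1" using mQ cQ cP2 by simp
    have ord: "r (qs!i) (qs!j)" if "i < j" "j < m" for i j
      using qs(3) that unfolding m_def by (simp add: sorted_wrt_iff_nth_less)
    have qsP: "qs ! i \<in> P" if "i < m" for i using that qs(1) QP unfolding m_def by auto
    have qsu: "qs ! i \<noteq> u" if "i < m" for i using that qs(1) uQ unfolding m_def by auto
    define w where "w x = 2 - int (t x)" for x
    define S where "S k = (\<Sum>x\<in>set (take k qs). w x)" for k
    have S0: "S 0 = 0" unfolding S_def by simp
    have wle: "w x \<le> 1" if "x \<in> P" for x using tge that unfolding w_def by force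
    have sumP: "(\<Sum>x\<in>P. w x) = 2" using sm unfolding w_def by simp
    have Sm: "S m = 2 - w u"
    proof -
      have "set (take m qs) = Q" unfolding m_def using qs by simp
      then have "S m = (\<Sum>x\<in>Q. w x)" unfolding S_def by simp
      moreover have "(\<Sum>x\<in>P. w x) = w u + (\<Sum>x\<in>Q. w x)" using PQ uQ finQ by simp
      ultimately show ?thesis using sumP by simp
    qed
    have Ssuc: "S (Suc k) = S k + w (qs!k)" if "k < m" for k
    proof -
      have "set (take (Suc k) qs) = insert (qs!k) (set (take k qs))"
        using that unfolding m_def by (simp add: take_Suc_conv_app_nth)
      moreover have "qs!k \<notin> set (take k qs)"
      proof
        assume "qs!k \<in> set (take k qs)"
        moreover have "qs!k \<in> set (drop k qs)" using that unfolding m_def by (metis Cons_nth_drop_Suc list.set_intros(1))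
        moreover have "set (take k qs) \<inter> set (drop k qs) = {}" using qs(2) by (simp add: set_take_disj_set_drop_if_distinct)
        ultimately show False by blast
      qed
      ultimately show ?thesis unfolding S_def by simp
    qed
    have td_disj: "set (take k qs) \<inter> set (drop k' qs) = {}" if "k \<le> k'" for k k'
      using qs(2) that by (simp add: set_take_disj_set_drop_if_distinct)
    have td_un: "set (take k qs) \<union> set (drop k qs) = Q" for k
      using qs(1) by (metis append_take_drop_id set_append)
    have Sdrop: "(\<Sum>x\<in>set (drop k qs). w x) = S m - S k" for k
    proof -
      have "S m = (\<Sum>x\<in>Q. w x)" unfolding S_def m_def using qs by simp
      also have "\<dots> = S k + (\<Sum>x\<in>set (drop k qs). w x)"
        unfolding S_def using td_un[of k] td_disj[of k k] by (metis List.finite_set sum.union_disjoint order_refl)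
      finally show ?thesis by simp
    qed
    have take_mem: "\<exists>i<k. i < m \<and> y = qs!i" if "y \<in> set (take k qs)" for y k
      using that unfolding m_def by (auto simp: in_set_conv_nth)
    have drop_mem: "\<exists>i. k \<le> i \<and> i < m \<and> z = qs!i" if zin: "z \<in> set (drop k qs)" for z k
    proof -
      obtain i where i: "i < length (drop k qs)" "drop k qs ! i = z" using zin unfolding in_set_conv_nth by blast
      then have "k + i < m" "z = qs ! (k + i)" unfolding m_def by auto
      then show ?thesis by (intro exI[of _ "k + i"]) auto
    qed
    have gpS: "general_position S'" if "S' \<subseteq> P" for S' using gp_subset[OF gp that] .
    show ?thesis
    proof (cases "t u \<ge> 2")
      case True
      note tu = True
      have Smge: "S m \<ge> 2" using Sm tu unfolding w_def by simp
      define j where "j = (LEAST j. S j \<ge> 1)"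
      have Sj: "S j \<ge> 1" unfolding j_def by (rule LeastI[of _ m]) (use Smge in simp)
      have jm: "j \<le> m" unfolding j_def by (rule Least_le) (use Smge in simp)
      have j0: "j \<noteq> 0"
      proof
        assume "j = 0" then show False using S0 Sj by simp
      qed
      have Sjm1: "\<not> S (j-1) \<ge> 1" unfolding j_def
        by (rule not_less_Least) (use j0 in \<open>simp add: j_def\<close>)
      have jm1: "j - 1 < m" using jm j0 by simp
      have "S j = S (j-1) + w (qs!(j-1))" using Ssuc[OF jm1] j0 by simp
      moreover have "w (qs!(j-1)) \<le> 1" using wle qsP[OF jm1] by blast
      ultimately have Sj1: "S j = 1" using Sj Sjm1 by linarith
      have jlm: "j < m" using jm Sj1 Smge by (metis le_neq_implies_less one_less_numeral_iff semiring_norm(76) not_le)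
      define Y where "Y = insert u (set (take j qs))"
      define Z where "Z = insert u (set (drop j qs))"
      define tY where "tY = t(u := 1)"
      define tZ where "tZ = t(u := t u - 1)"
      have uT: "u \<notin> set (take j qs)" "u \<notin> set (drop j qs)" using uQ td_un[of j] by auto
      have YP: "Y \<subseteq> P" unfolding Y_def using td_un[of j] QP uP by auto
      have ZP: "Z \<subseteq> P" unfolding Z_def using td_un[of j] QP uP by auto
      have finY: "finite Y" "finite Z" unfolding Y_def Z_def by auto
      have YZ: "Y \<inter> Z = {u}" unfolding Y_def Z_def using td_disj[of j j] by auto
      have YZP: "Y \<union> Z = P" unfolding Y_def Z_def using td_un[of j] PQ by auto
      have cardY: "card Y < card P"
      proof (rule psubset_card_mono[OF fin])
        have "qs ! j \<in> set (drop j qs)" using jlm unfolding m_def by (metis Cons_nth_drop_Suc list.set_intros(1))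
        then have "qs ! j \<notin> Y" unfolding Y_def using td_disj[of j j] qsu[OF jlm] by auto
        then show "Y \<subset> P" using YP qsP[OF jlm] by blast
      qed
      have cardZ: "card Z < card P"
      proof (rule psubset_card_mono[OF fin])
        have "qs ! 0 \<in> set (take j qs)" using j0 jlm unfolding m_def by (simp add: take_Suc_conv_app_nth in_set_conv_nth) (metis gr0I length_take min.absorb4 nth_take jlm m_def)
        then have "qs ! 0 \<notin> Z" unfolding Z_def using td_disj[of j j] qsu[of 0] m1 by auto
        then show "Z \<subset> P" using ZP qsP[of 0] m1 by auto
      qed
      have sumY: "(\<Sum>x\<in>Y. 2 - int (tY x)) = 2"
      proof -
        have "(\<Sum>x\<in>Y. 2 - int (tY x)) = (2 - int (tY u)) + (\<Sum>x\<in>set (take j qs). 2 - int (tY x))"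
          unfolding Y_def using uT by simp
        also have "(\<Sum>x\<in>set (take j qs). 2 - int (tY x)) = S j"
          unfolding S_def w_def tY_def using uT by (intro sum.cong) auto
        finally show ?thesis using Sj1 unfolding tY_def by simp
      qed
      have sumZ: "(\<Sum>x\<in>Z. 2 - int (tZ x)) = 2"
      proof -
        have "(\<Sum>x\<in>Z. 2 - int (tZ x)) = (2 - int (tZ u)) + (\<Sum>x\<in>set (drop j qs). 2 - int (tZ x))"
          unfolding Z_def using uT by simp
        also have "(\<Sum>x\<in>set (drop j qs). 2 - int (tZ x)) = (\<Sum>x\<in>set (drop j qs). w x)"
          unfolding w_def tZ_def using uT by (intro sum.cong) auto
        also have "\<dots> = S m - S j" by (rule Sdrop)
        finally show ?thesis using Sj1 Sm tu unfolding tZ_def w_def by simp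
      qed
      have tYge: "\<forall>x\<in>Y. tY x \<ge> 1" using tge YP unfolding tY_def by auto
      have tZge: "\<forall>x\<in>Z. tZ x \<ge> 1" using tge ZP tu unfolding tZ_def by auto
      obtain TY where TY: "is_tree Y TY" "non_crossing TY" "\<forall>x\<in>Y. degree TY x = tY x"
        using less.hyps[OF cardY finY(1) _ gpS[OF YP] _ sumY] tYge unfolding Y_def by blast
      obtain TZ where TZ: "is_tree Z TZ" "non_crossing TZ" "\<forall>x\<in>Z. degree TZ x = tZ x"
        using less.hyps[OF cardZ finY(2) _ gpS[OF ZP] _ sumZ] tZge unfolding Z_def by blast
      have tree: "is_tree P (TY \<union> TZ)" using tree_glue(1)[OF TY(1) TZ(1) YZ] YZP by simp
      define a where "a = qs ! (j - 1)"
      define b where "b = qs ! j"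
      define d where "d = (a - u) + (b - u)"
      have sy: "\<forall>y\<in>Y. y = u \<or> cross2 d (y - u) < 0"
      proof
        fix y assume "y \<in> Y"
        show "y = u \<or> cross2 d (y - u) < 0"
        proof (cases "y = u")
          case False
          then have "y \<in> set (take j qs)" using \<open>y \<in> Y\<close> unfolding Y_def by simp
          then obtain i where i: "i < j" "i < m" "y = qs ! i" using take_mem by blast
          have "cross2 (a - u) (y - u) \<le> 0"
          proof (cases "i = j - 1")
            case True then show ?thesis unfolding a_def using i by (simp add: cross2_self)
          next
            case False
            then have "r y a" unfolding a_def using i ord[of i "j-1"] jm1 by simp
            then show ?thesis unfolding r_def using cross2_anti[of "a - u" "y - u"] by simp
          qed
          moreover have "r y b" unfolding b_def using i ord[of i j] jlm by simp
          then have "cross2 (b - u) (y - u) < 0" unfolding r_def using cross2_anti[of "b - u" "y - u"] by simp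
          ultimately show ?thesis unfolding d_def cross2_add_left by simp
        qed simp
      qed
      have sz: "\<forall>z\<in>Z. cross2 d (z - u) \<ge> 0"
      proof
        fix z assume "z \<in> Z"
        show "cross2 d (z - u) \<ge> 0"
        proof (cases "z = u")
          case True then show ?thesis by (simp add: cross2_zero_right)
        next
          case False
          then have "z \<in> set (drop j qs)" using \<open>z \<in> Z\<close> unfolding Z_def by simp
          then obtain i where i: "j \<le> i" "i < m" "z = qs ! i" using drop_mem by blast
          have "r a z" unfolding a_def using i ord[of "j-1" i] j0 by simp
          then have "cross2 (a - u) (z - u) > 0" unfolding r_def by simp
          moreover have "cross2 (b - u) (z - u) \<ge> 0"
          proof (cases "i = j")
            case True then show ?thesis unfolding b_def using i by (simp add: cross2_self)
          next
            case False
            then have "r b z" unfolding b_def using i ord[of j i] by simp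
            then show ?thesis unfolding r_def by simp
          qed
          ultimately show ?thesis unfolding d_def cross2_add_left by simp
        qed
      qed
      have gYZ: "graph_on Y TY" "graph_on Z TZ" using TY(1) TZ(1) unfolding is_tree_def by auto
      have cmp: "compat TY TZ" "compat TZ TY"
        using compat_sep[OF gp gYZ YP ZP uP sy sz] by auto
      have nc: "non_crossing (TY \<union> TZ)" using nc_union[OF TY(2) TZ(2) cmp] .
      have deg: "\<forall>x\<in>P. degree (TY \<union> TZ) x = t x"
      proof
        fix x assume "x \<in> P"
        have dsum: "degree (TY \<union> TZ) x = degree TY x + degree TZ x"
          using deg_glue[OF TY(1) TZ(1) YZ finY] .
        show "degree (TY \<union> TZ) x = t x"
        proof (cases "x = u")
          case True
          then show ?thesis using dsum TY(3) TZ(3) tu unfolding Y_def Z_def tY_def tZ_def by simp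
        next
          case False
          then have "x \<in> Y \<and> x \<notin> Z \<or> x \<in> Z \<and> x \<notin> Y" using \<open>x \<in> P\<close> YZP YZ by blast
          then show ?thesis
          proof
            assume "x \<in> Y \<and> x \<notin> Z"
            then show ?thesis using dsum TY(3) degree_out[OF gYZ(2)] False unfolding tY_def by simp
          next
            assume "x \<in> Z \<and> x \<notin> Y"
            then show ?thesis using dsum TZ(3) degree_out[OF gYZ(1)] False unfolding tZ_def by simp
          qed
        qed
      qed
      show ?thesis using tree nc deg by blast
    next
      case False
      then have tu: "t u = 1" using tge uP by force
      have Sm1: "S m = 1" using Sm tu unfolding w_def by simp
      define K where "K = {k. k < m \<and> (k = 0 \<or> S k \<ge> 1)}"
      define k where "k = Max K"
      have finK: "finite K" unfolding K_def by simp
      have K0: "0 \<in> K" unfolding K_def using m1 by simp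
      have kK: "k \<in> K" unfolding k_def using finK K0 by (intro Max_in) auto
      have kmax: "k' \<le> k" if "k' \<in> K" for k' unfolding k_def using finK that by simp
      have km: "k < m" and Sk: "k = 0 \<or> S k \<ge> 1" using kK unfolding K_def by auto
      have Sk0: "S k \<ge> 0" using Sk S0 by auto
      have Sk1: "Suc k = m \<or> S (Suc k) \<le> 0"
      proof (cases "Suc k < m")
        case True
        have "Suc k \<notin> K" using kmax by fastforce
        then have "\<not> S (Suc k) \<ge> 1" unfolding K_def using True by simp
        then show ?thesis by simp
      next
        case False then show ?thesis using km by simp
      qed
      have Sk1': "1 - S (Suc k) \<ge> 0" using Sk1 Sm1 by auto
      define q where "q = qs ! k"
      define A where "A = set (take k qs)"
      define C where "C = set (drop (Suc k) qs)"
      have qP: "q \<in> P" and qu: "q \<noteq> u" unfolding q_def using qsP[OF km] qsu[OF km] by auto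
      have dropk: "drop k qs = q # drop (Suc k) qs" unfolding q_def using km unfolding m_def by (simp add: Cons_nth_drop_Suc)
      have qA: "q \<notin> A" unfolding A_def using td_disj[of k k] dropk by auto
      have qC: "q \<notin> C" unfolding C_def using qs(2) dropk by (metis distinct.simps(2) distinct_drop)
      have AC: "A \<inter> C = {}" unfolding A_def C_def using td_disj[of k "Suc k"] by simp
      have QAC: "Q = insert q (A \<union> C)" unfolding A_def C_def using td_un[of k] dropk by auto
      have AQ: "A \<subseteq> Q" and CQ: "C \<subseteq> Q" using QAC by auto
      define Y where "Y = insert q A"
      define Z where "Z = insert q C"
      define tY where "tY = t(q := nat (S k))"
      define tZ where "tZ = t(q := nat (1 - S (Suc k)))"
      have YP: "Y \<subseteq> Q" "Z \<subseteq> Q" unfolding Y_def Z_def using QAC by auto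
      have YPP: "Y \<subseteq> P" "Z \<subseteq> P" using YP QP by auto
      have finY: "finite Y" "finite Z" unfolding Y_def Z_def A_def C_def by auto
      have cardY: "card Y < card P" "card Z < card P"
        using psubset_card_mono[OF fin] YP uQ uP by (metis psubsetI subset_insertI2 PQ insert_subset)+
      have YZ: "Y \<inter> Z = {q}" unfolding Y_def Z_def using AC by auto
      have sumY: "(\<Sum>x\<in>Y. 2 - int (tY x)) = 2"
      proof -
        have "(\<Sum>x\<in>Y. 2 - int (tY x)) = (2 - int (tY q)) + (\<Sum>x\<in>A. 2 - int (tY x))"
          unfolding Y_def using qA by (simp add: A_def)
        also have "(\<Sum>x\<in>A. 2 - int (tY x)) = S k"
          unfolding S_def w_def tY_def A_def using qA unfolding A_def by (intro sum.cong) auto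
        finally show ?thesis using Sk0 unfolding tY_def by simp
      qed
      have sumZ: "(\<Sum>x\<in>Z. 2 - int (tZ x)) = 2"
      proof -
        have "(\<Sum>x\<in>Z. 2 - int (tZ x)) = (2 - int (tZ q)) + (\<Sum>x\<in>C. 2 - int (tZ x))"
          unfolding Z_def using qC by (simp add: C_def)
        also have "(\<Sum>x\<in>C. 2 - int (tZ x)) = (\<Sum>x\<in>C. w x)"
          unfolding w_def tZ_def using qC by (intro sum.cong) auto
        also have "\<dots> = S m - S (Suc k)" unfolding C_def by (rule Sdrop)
        finally show ?thesis using Sk1' Sm1 unfolding tZ_def by simp
      qed
      have preY: "(\<forall>x\<in>Y. tY x \<ge> 1) \<or> card Y = 1"
      proof (cases "k = 0")
        case True then have "Y = {q}" unfolding Y_def A_def by simp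
        then show ?thesis by simp
      next
        case False
        then have "S k \<ge> 1" using Sk by simp
        then show ?thesis using tge YPP unfolding tY_def by auto
      qed
      have preZ: "(\<forall>x\<in>Z. tZ x \<ge> 1) \<or> card Z = 1"
      proof (cases "Suc k = m")
        case True then have "Z = {q}" unfolding Z_def C_def m_def by simp
        then show ?thesis by simp
      next
        case False
        then have "S (Suc k) \<le> 0" using Sk1 by simp
        then show ?thesis using tge YPP unfolding tZ_def by auto
      qed
      obtain TY where TY: "is_tree Y TY" "non_crossing TY" "\<forall>x\<in>Y. degree TY x = tY x"
        using less.hyps[OF cardY(1) finY(1) _ gpS[OF YPP(1)] preY sumY] unfolding Y_def by blast
      obtain TZ where TZ: "is_tree Z TZ" "non_crossing TZ" "\<forall>x\<in>Z. degree TZ x = tZ x"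
        using less.hyps[OF cardY(2) finY(2) _ gpS[OF YPP(2)] preZ sumZ] unfolding Z_def by blast
      define X where "X = {u, q}"
      define TX where "TX = {{u, q}}"
      have TX: "is_tree X TX" unfolding X_def TX_def using tree_edge qu by metis
      have qY: "q \<in> Y" unfolding Y_def by simp
      have XYZ: "X \<inter> (Y \<union> Z) = {q}" unfolding X_def using YP uQ qY by auto
      have finX: "finite X" "finite (Y \<union> Z)" unfolding X_def using finY by auto
      have tYZ: "is_tree (Y \<union> Z) (TY \<union> TZ)" using tree_glue(1)[OF TY(1) TZ(1) YZ] .
      have tree0: "is_tree (X \<union> (Y \<union> Z)) (TX \<union> (TY \<union> TZ))" using tree_glue(1)[OF TX tYZ XYZ] .
      have XP: "X \<union> (Y \<union> Z) = P" unfolding X_def Y_def Z_def using PQ QAC by auto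
      have tree: "is_tree P (TX \<union> (TY \<union> TZ))" using tree0 XP by simp
      have phi: "cross2 (q - u) (x - q) = cross2 (q - u) (x - u)" for x
        using cross2_shift[of "q - u" x q u] by (simp add: cross2_self)
      have phi': "cross2 (u - q) (x - q) = - cross2 (q - u) (x - u)" for x
        using phi[of x] cross2_minus_left[of u q "x - q"] by simp
      have sy: "\<forall>y\<in>Y. y = q \<or> cross2 (q - u) (y - q) < 0"
      proof
        fix y assume "y \<in> Y"
        show "y = q \<or> cross2 (q - u) (y - q) < 0"
        proof (cases "y = q")
          case False
          then have "y \<in> A" using \<open>y \<in> Y\<close> unfolding Y_def by simp
          then obtain i where i: "i < k" "i < m" "y = qs ! i" using take_mem unfolding A_def by blast
          have "r y q" unfolding q_def using i ord[of i k] km by simp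
          then show ?thesis unfolding r_def phi using cross2_anti[of "q - u" "y - u"] by simp
        qed simp
      qed
      have sz: "\<forall>z\<in>Z. z = q \<or> cross2 (u - q) (z - q) < 0"
      proof
        fix z assume "z \<in> Z"
        show "z = q \<or> cross2 (u - q) (z - q) < 0"
        proof (cases "z = q")
          case False
          then have "z \<in> C" using \<open>z \<in> Z\<close> unfolding Z_def by simp
          then obtain i where i: "Suc k \<le> i" "i < m" "z = qs ! i" using drop_mem unfolding C_def by blast
          have "r q z" unfolding q_def using i ord[of k i] by simp
          then show ?thesis unfolding r_def phi' by simp
        qed simp
      qed
      have sz': "\<forall>z\<in>Z. cross2 (q - u) (z - q) \<ge> 0"
      proof
        fix z assume "z \<in> Z"
        then have "z = q \<or> cross2 (u - q) (z - q) < 0" using sz by blast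
        then show "cross2 (q - u) (z - q) \<ge> 0"
        proof
          assume "z = q" then show ?thesis by (simp add: cross2_zero_right)
        next
          assume "cross2 (u - q) (z - q) < 0"
          then show ?thesis unfolding phi' phi by simp
        qed
      qed
      have sx: "\<forall>x\<in>X. cross2 (q - u) (x - q) \<ge> 0" "\<forall>x\<in>X. cross2 (u - q) (x - q) \<ge> 0"
        unfolding X_def phi phi' by (auto simp: cross2_self cross2_zero_right)
      have XPP: "X \<subseteq> P" unfolding X_def using uP qP by simp
      have gr: "graph_on Y TY" "graph_on Z TZ" "graph_on X TX" using TY(1) TZ(1) TX unfolding is_tree_def by auto
      have c1: "compat TY TZ" "compat TZ TY" using compat_sep[OF gp gr(1) gr(2) YPP(1) YPP(2) qP sy sz'] by auto
      have c2: "compat TY TX" "compat TX TY" using compat_sep[OF gp gr(1) gr(3) YPP(1) XPP qP sy sx(1)] by auto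
      have c3: "compat TZ TX" "compat TX TZ" using compat_sep[OF gp gr(2) gr(3) YPP(2) XPP qP sz sx(2)] by auto
      have ncYZ: "non_crossing (TY \<union> TZ)" using nc_union[OF TY(2) TZ(2) c1] .
      have nc: "non_crossing (TX \<union> (TY \<union> TZ))"
        using nc_union[OF _ ncYZ compat_Un_right[OF c2(2) c3(2)] compat_Un_left[OF c2(1) c3(1)]] nc_edge
        unfolding TX_def by blast
      have deg: "\<forall>x\<in>P. degree (TX \<union> (TY \<union> TZ)) x = t x"
      proof
        fix x assume xP: "x \<in> P"
        have d1: "degree (TX \<union> (TY \<union> TZ)) x = degree TX x + degree (TY \<union> TZ) x"
          using deg_glue[OF TX tYZ XYZ finX] .
        have d2: "degree (TY \<union> TZ) x = degree TY x + degree TZ x"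
          using deg_glue[OF TY(1) TZ(1) YZ finY] .
        have dX: "degree TX u = 1" "degree TX q = 1" unfolding TX_def using degree_edge[OF qu[symmetric]] by auto
        show "degree (TX \<union> (TY \<union> TZ)) x = t x"
        proof -
          consider "x = u" | "x = q" | "x \<in> A" | "x \<in> C" using xP PQ QAC by blast
          then show ?thesis
          proof cases
            case 1
            have "u \<notin> Y" "u \<notin> Z" using YP uQ by auto
            then show ?thesis using 1 d1 d2 dX tu degree_out[OF gr(1)] degree_out[OF gr(2)] by simp
          next
            case 2
            have "int (degree TY q) = S k" using TY(3) Sk0 unfolding tY_def Y_def by simp
            moreover have "int (degree TZ q) = 1 - S (Suc k)" using TZ(3) Sk1' unfolding tZ_def Z_def by simp
            moreover have "S (Suc k) = S k + w q" using Ssuc[OF km] unfolding q_def by simp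
            ultimately have e: "int (degree TY q) + int (degree TZ q) + 1 = int (t q)" unfolding w_def by simp
            then have "int (degree TY q + degree TZ q + 1) = int (t q)" by simp
            then have "degree TY q + degree TZ q + 1 = t q" by (simp only: of_nat_eq_iff)
            then show ?thesis using 2 d1 d2 dX by simp
          next
            case 3
            have "x \<notin> X" "x \<notin> Z" "x \<noteq> q" using 3 qA AC uQ AQ unfolding X_def Z_def by auto
            then show ?thesis using 3 d1 d2 TY(3) degree_out[OF gr(3)] degree_out[OF gr(2)] unfolding Y_def tY_def by simp
          next
            case 4
            have "x \<notin> X" "x \<notin> Y" "x \<noteq> q" using 4 qC AC uQ CQ unfolding X_def Y_def by auto
            then show ?thesis using 4 d1 d2 TZ(3) degree_out[OF gr(3)] degree_out[OF gr(1)] unfolding Z_def tZ_def by simp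
          qed
        qed
      qed
      show ?thesis using tree nc deg by blast
    qed
  qed
qed


lemma choose_g:
  fixes R :: "'a set" and f :: "'a \<Rightarrow> nat"
  assumes "finite R" "\<forall>x\<in>R. f x \<ge> 2" "k \<le> (\<Sum>x\<in>R. f x - 2)"
  shows "\<exists>g. (\<forall>x\<in>R. 2 \<le> g x \<and> g x \<le> f x) \<and> (\<Sum>x\<in>R. g x - 2) = k"
  using assms
proof (induction R arbitrary: k rule: finite_induct)
  case empty then show ?case by simp
next
  case (insert a F)
  define k1 where "k1 = min k (\<Sum>x\<in>F. f x - 2)"
  have "\<forall>x\<in>F. f x \<ge> 2" using insert.prems(1) by simp
  then obtain g where g: "\<forall>x\<in>F. 2 \<le> g x \<and> g x \<le> f x" "(\<Sum>x\<in>F. g x - 2) = k1"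
    using insert.IH[of k1] unfolding k1_def by auto
  define g' where "g' = g(a := 2 + (k - k1))"
  have fa: "f a \<ge> 2" using insert.prems(1) by simp
  have ksum: "k \<le> (f a - 2) + (\<Sum>x\<in>F. f x - 2)" using insert.prems(2) insert.hyps by simp
  have "k - k1 \<le> f a - 2" using ksum unfolding k1_def by linarith
  then have ga: "2 \<le> g' a \<and> g' a \<le> f a" unfolding g'_def using fa by simp
  have "(\<Sum>x\<in>F. g' x - 2) = (\<Sum>x\<in>F. g x - 2)" unfolding g'_def using insert.hyps(2)
    by (intro sum.cong) auto
  then have "(\<Sum>x\<in>insert a F. g' x - 2) = (k - k1) + k1" using insert.hyps g(2) unfolding g'_def by simp
  also have "\<dots> = k" unfolding k1_def by simp
  finally have sk: "(\<Sum>x\<in>insert a F. g' x - 2) = k" .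
  have all: "\<forall>x\<in>insert a F. 2 \<le> g' x \<and> g' x \<le> f x"
  proof
    fix x assume "x \<in> insert a F"
    then show "2 \<le> g' x \<and> g' x \<le> f x"
    proof (cases "x = a")
      case True then show ?thesis using ga by simp
    next
      case False
      then have "x \<in> F" "g' x = g x" using \<open>x \<in> insert a F\<close> unfolding g'_def by auto
      then show ?thesis using g(1) by simp
    qed
  qed
  show ?case using sk all by blast
qed

theorem theorem1:
  fixes R B :: "point set" and f :: "point \<Rightarrow> nat"
  assumes "finite R" and "finite B" and "R \<inter> B = {}"
    and "general_position (R \<union> B)"
    and "\<forall>x\<in>R. f x \<ge> 2"
    and "2 \<le> card B" and "card B \<le> (\<Sum>x\<in>R. (f x - 2)) + 2"
  shows "\<exists>T. is_tree (R \<union> B) T \<and> non_crossing T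
            \<and> {v \<in> R \<union> B. degree T v = 1} = B
            \<and> (\<forall>x\<in>R. 2 \<le> degree T x \<and> degree T x \<le> f x)
            \<and> (card B = (\<Sum>x\<in>R. (f x - 2)) + 2 \<longrightarrow> (\<forall>x\<in>R. degree T x = f x))"
proof -
  obtain g where g: "\<forall>x\<in>R. 2 \<le> g x \<and> g x \<le> f x" "(\<Sum>x\<in>R. g x - 2) = card B - 2"
  proof -
    have "card B - 2 \<le> (\<Sum>x\<in>R. f x - 2)" using assms(7) by linarith
    then show ?thesis using choose_g[OF assms(1) assms(5), of "card B - 2"] that by blast
  qed
  define t where "t x = (if x \<in> R then g x else 1)" for x
  have finP: "finite (R \<union> B)" using assms(1,2) by simp
  have neP: "R \<union> B \<noteq> {}" using assms(6) by auto
  have tge: "\<forall>x\<in>R \<union> B. t x \<ge> 1" unfolding t_def using g(1) by auto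
  have sR: "(\<Sum>x\<in>R. 2 - int (t x)) = - int (card B - 2)"
  proof -
    have "(\<Sum>x\<in>R. 2 - int (t x)) = (\<Sum>x\<in>R. - int (g x - 2))"
      unfolding t_def using g(1) by (intro sum.cong) (auto simp: of_nat_diff)
    also have "\<dots> = - int (\<Sum>x\<in>R. g x - 2)" by (simp add: sum_negf)
    finally show ?thesis using g(2) by simp
  qed
  have sB: "(\<Sum>x\<in>B. 2 - int (t x)) = int (card B)"
  proof -
    have "(\<Sum>x\<in>B. 2 - int (t x)) = (\<Sum>x\<in>B. 1)" unfolding t_def using assms(3) by (intro sum.cong) auto
    then show ?thesis by simp
  qed
  have sm: "(\<Sum>x\<in>R \<union> B. 2 - int (t x)) = 2"
    using sR sB assms(1-3,6) by (simp add: sum.union_disjoint of_nat_diff)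
  obtain T where T: "is_tree (R \<union> B) T" "non_crossing T" "\<forall>x\<in>R \<union> B. degree T x = t x"
    using core[OF finP neP assms(4) _ sm] tge by blast
  have degR: "degree T x = g x" if "x \<in> R" for x using T(3) that unfolding t_def by simp
  have degB: "degree T x = 1" if "x \<in> B" for x using T(3) that assms(3) unfolding t_def by auto
  have leaves: "{v \<in> R \<union> B. degree T v = 1} = B"
  proof
    show "{v \<in> R \<union> B. degree T v = 1} \<subseteq> B" using degR g(1) by fastforce
    show "B \<subseteq> {v \<in> R \<union> B. degree T v = 1}" using degB by auto
  qed
  have bounds: "\<forall>x\<in>R. 2 \<le> degree T x \<and> degree T x \<le> f x" using degR g(1) by simp
  have eq: "\<forall>x\<in>R. degree T x = f x" if cb: "card B = (\<Sum>x\<in>R. (f x - 2)) + 2"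
  proof (rule ccontr)
    assume "\<not> (\<forall>x\<in>R. degree T x = f x)"
    then obtain a where a: "a \<in> R" "g a \<noteq> f a" using degR by auto
    have "(\<Sum>x\<in>R. g x - 2) < (\<Sum>x\<in>R. f x - 2)"
    proof (rule sum_strict_mono_ex1[OF assms(1)])
      show "\<forall>x\<in>R. g x - 2 \<le> f x - 2" using g(1) by (simp add: diff_le_mono)
      show "\<exists>x\<in>R. g x - 2 < f x - 2" using a g(1) by (intro bexI[of _ a]) auto
    qed
    then show False using g(2) cb by simp
  qed
  show ?thesis using T(1,2) leaves bounds eq by blast
qed

end
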